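(* Let $\Delta \ge 3$ be an integer and let $\varepsilon > 0$. There is no local algorithm that, on every weakly $2$-coloured graph $\mathcal{G}$ of maximum degree at most $\Delta$ (with the weak colouring given as input), outputs a matching $M$ of $\mathcal{G}$ with $|M^*| \le \bigl(\tfrac{\Delta+1}{2}-\varepsilon\bigr)|M|$, where $M^*$ is a maximum matching of $\mathcal{G}$. This holds even if the nodes have unique identifiers from $\{1,\dots,|V|\}$, know $|V|$, and messages and local computation are unbounded.
   Context: Model: a graph $\mathcal{G}=(V,E)$ without isolated nodes is a distributed system; every node runs the same deterministic algorithm. Communication is synchronous: in each round every node receives messages from its neighbours, performs local computation, and sends messages to its neighbours. Each node knows its degree, its own input label (e.g. its colour), and the global degree bound $\Delta$. A local algorithm is one that terminates after $T$ rounds, where $T$ may depend on $\Delta$ but not on the number of nodes; its output at a node is whether the node belongs to the solution (for edge problems, which incident edges belong to it). A weak $2$-colouring assigns each node black or white so that every non-isolated node has at least one neighbour of the opposite colour; it is given as input. An algorithm has approximation factor $\alpha$ for a maximisation problem if its output is always feasible with size at least $1/\alpha$ times the optimum. *)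

theory Defs
  imports Complex_Main
begin

text \<open>Graphs on vertex set {1..n}; vertex names serve as the unique identifiers.
  E is the (symmetric, irreflexive) adjacency relation.\<close>

definition valid_graph :: "nat \<Rightarrow> nat \<Rightarrow> (nat \<Rightarrow> nat \<Rightarrow> bool) \<Rightarrow> bool" where
  "valid_graph \<Delta> n E \<longleftrightarrow>
     (\<forall>u v. E u v \<longrightarrow> u \<in> {1..n} \<and> v \<in> {1..n} \<and> u \<noteq> v \<and> E v u)
   \<and> (\<forall>v\<in>{1..n}. \<exists>u. E v u)
   \<and> (\<forall>v\<in>{1..n}. card {u. E v u} \<le> \<Delta>)"

text \<open>Weak 2-colouring (True = black, False = white).\<close>
definition weak_2_colouring :: "nat \<Rightarrow> (nat \<Rightarrow> nat \<Rightarrow> bool) \<Rightarrow> (nat \<Rightarrow> bool) \<Rightarrow> bool" where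
  "weak_2_colouring n E c \<longleftrightarrow> (\<forall>v\<in>{1..n}. \<exists>u. E v u \<and> c u \<noteq> c v)"

definition wc_instance :: "nat \<Rightarrow> nat \<Rightarrow> (nat \<Rightarrow> nat \<Rightarrow> bool) \<Rightarrow> (nat \<Rightarrow> bool) \<Rightarrow> bool" where
  "wc_instance \<Delta> n E c \<longleftrightarrow> valid_graph \<Delta> n E \<and> weak_2_colouring n E c"

primrec reach_le :: "(nat \<Rightarrow> nat \<Rightarrow> bool) \<Rightarrow> nat \<Rightarrow> nat \<Rightarrow> nat \<Rightarrow> bool" where
  "reach_le E 0 v u \<longleftrightarrow> u = v"
| "reach_le E (Suc r) v u \<longleftrightarrow> reach_le E r v u \<or> (\<exists>w. reach_le E r v w \<and> E w u)"

text \<open>An algorithm maps (n, graph, colouring, node v) to the set of neighbours u of v such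
  that v declares the edge {v,u} to be in the output.  It is local with radius r if, on
  valid instances with the same n, the output of v depends only on the colours and
  neighbourhoods (neighbour identifiers) of the nodes reach_le distance r of v.  This is
  (up to shifting r by one) exactly the information available after r synchronous rounds
  with unbounded messages and computation, unique identifiers and knowledge of n.\<close>
type_synonym algorithm = "nat \<Rightarrow> (nat \<Rightarrow> nat \<Rightarrow> bool) \<Rightarrow> (nat \<Rightarrow> bool) \<Rightarrow> nat \<Rightarrow> nat set"

definition local_alg :: "nat \<Rightarrow> nat \<Rightarrow> algorithm \<Rightarrow> bool" where
  "local_alg \<Delta> r A \<longleftrightarrow>
     (\<forall>n E c E' c' v. wc_instance \<Delta> n E c \<longrightarrow> wc_instance \<Delta> n E' c' \<longrightarrow> v \<in> {1..n} \<longrightarrow>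
        (\<forall>u. reach_le E r v u \<longrightarrow> (\<forall>w. E u w = E' u w) \<and> c u = c' u) \<longrightarrow>
        A n E c v = A n E' c' v)"

definition edges :: "(nat \<Rightarrow> nat \<Rightarrow> bool) \<Rightarrow> nat set set" where
  "edges E = {{u, v} | u v. E u v}"

definition matching :: "(nat \<Rightarrow> nat \<Rightarrow> bool) \<Rightarrow> nat set set \<Rightarrow> bool" where
  "matching E M \<longleftrightarrow> M \<subseteq> edges E \<and> (\<forall>e\<in>M. \<forall>f\<in>M. e \<noteq> f \<longrightarrow> e \<inter> f = {})"

definition max_matching_size :: "(nat \<Rightarrow> nat \<Rightarrow> bool) \<Rightarrow> nat" where
  "max_matching_size E = Max (card ` {M. matching E M})"

definition output_edges :: "algorithm \<Rightarrow> nat \<Rightarrow> (nat \<Rightarrow> nat \<Rightarrow> bool) \<Rightarrow> (nat \<Rightarrow> bool) \<Rightarrow> nat set set" where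
  "output_edges A n E c = {{u, v} | u v. E u v \<and> v \<in> A n E c u \<and> u \<in> A n E c v}"

definition approx_matching_alg :: "nat \<Rightarrow> real \<Rightarrow> algorithm \<Rightarrow> bool" where
  "approx_matching_alg \<Delta> \<alpha> A \<longleftrightarrow>
     (\<forall>n E c. wc_instance \<Delta> n E c \<longrightarrow>
        (\<forall>v\<in>{1..n}. A n E c v \<subseteq> {u. E v u})
      \<and> (\<forall>u v. E u v \<longrightarrow> (v \<in> A n E c u \<longleftrightarrow> u \<in> A n E c v))
      \<and> matching E (output_edges A n E c)
      \<and> real (max_matching_size E) \<le> \<alpha> * real (card (output_edges A n E c)))"

end

theory Submission
  imports Defs "HOL-Library.Ramsey"
begin


definition vid :: "nat \<Rightarrow> nat \<Rightarrow> nat \<Rightarrow> nat" where "vid D x a = x * Suc D + a + 1"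
definition lab :: "nat \<Rightarrow> nat \<Rightarrow> nat" where "lab D u = (u - 1) div Suc D"
definition sb :: "nat \<Rightarrow> nat \<Rightarrow> nat" where "sb D u = (u - 1) mod Suc D"
definition pos :: "nat list \<Rightarrow> nat \<Rightarrow> nat" where "pos ps x = (THE i. i < length ps \<and> ps ! i = x)"
definition isperm :: "nat list \<Rightarrow> bool" where "isperm ps \<longleftrightarrow> distinct ps \<and> set ps = {0..<length ps}"
definition GE :: "nat \<Rightarrow> nat list \<Rightarrow> nat \<Rightarrow> nat \<Rightarrow> bool" where
 "GE D ps u v \<longleftrightarrow> 1 \<le> u \<and> u \<le> length ps * Suc D \<and> 1 \<le> v \<and> v \<le> length ps * Suc D \<and>
   ((lab D u = lab D v \<and> (sb D u = 0) \<noteq> (sb D v = 0)) \<or>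
    (sb D u = sb D v \<and> sb D u \<noteq> 0 \<and> (pos ps (lab D v) = Suc (pos ps (lab D u)) \<or> pos ps (lab D u) = Suc (pos ps (lab D v)))))"
definition colr :: "nat \<Rightarrow> nat \<Rightarrow> bool" where "colr D u = (sb D u \<noteq> 0)"

lemma lab_vid[simp]: "a \<le> D \<Longrightarrow> lab D (vid D x a) = x"
  unfolding lab_def vid_def by (simp del: mult_Suc_right)
lemma sb_vid[simp]: "a \<le> D \<Longrightarrow> sb D (vid D x a) = a"
  unfolding sb_def vid_def by (simp del: mult_Suc_right)
lemma vid_inj: "a \<le> D \<Longrightarrow> b \<le> D \<Longrightarrow> vid D x a = vid D y b \<longleftrightarrow> x = y \<and> a = b"
  by (metis lab_vid sb_vid)
lemma vid_ge1[simp]: "1 \<le> vid D x a" unfolding vid_def by simp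
lemma vid_le: "a \<le> D \<Longrightarrow> vid D x a \<le> L * Suc D \<longleftrightarrow> x < L"
proof
  assume "a \<le> D" "vid D x a \<le> L * Suc D"
  then have "x * Suc D < L * Suc D" unfolding vid_def by linarith
  then show "x < L" by (metis mult_less_cancel2)
next
  assume a: "a \<le> D" "x < L"
  then have "Suc x * Suc D \<le> L * Suc D" by (intro mult_le_mono1) simp
  then show "vid D x a \<le> L * Suc D" using a unfolding vid_def by simp
qed
lemma vid_surj: "1 \<le> u \<Longrightarrow> u \<le> L * Suc D \<Longrightarrow> u = vid D (lab D u) (sb D u) \<and> lab D u < L \<and> sb D u \<le> D"
proof -
  assume u: "1 \<le> u" "u \<le> L * Suc D"
  have e: "u = vid D (lab D u) (sb D u)" unfolding vid_def lab_def sb_def using u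
    by (metis Suc_eq_plus1 add.commute le_add_diff_inverse mod_div_mult_eq)
  have "sb D u \<le> D" unfolding sb_def using less_Suc_eq_le by auto
  moreover then have "lab D u < L" using vid_le[of "sb D u" D "lab D u" L] e u by simp
  ultimately show ?thesis using e by simp
qed

lemma pos_nth: "isperm ps \<Longrightarrow> i < length ps \<Longrightarrow> pos ps (ps ! i) = i"
  unfolding pos_def isperm_def by (rule the_equality) (auto simp: nth_eq_iff_index_eq)
lemma nth_pos: "isperm ps \<Longrightarrow> x < length ps \<Longrightarrow> pos ps x < length ps \<and> ps ! (pos ps x) = x"
proof -
  assume p: "isperm ps" "x < length ps"
  then obtain i where i: "i < length ps" "ps ! i = x" unfolding isperm_def
    by (metis atLeastLessThan_iff in_set_conv_nth zero_le)
  thus ?thesis using pos_nth[OF p(1) i(1)] by simp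
qed
lemma pos_eq_iff: "isperm ps \<Longrightarrow> y < length ps \<Longrightarrow> j < length ps \<Longrightarrow> pos ps y = j \<longleftrightarrow> y = ps ! j"
  using nth_pos pos_nth by metis
lemma nth_lt: "isperm ps \<Longrightarrow> i < length ps \<Longrightarrow> ps ! i < length ps"
  unfolding isperm_def by (metis atLeastLessThan_iff nth_mem)
lemma nth_inj: "isperm ps \<Longrightarrow> i < length ps \<Longrightarrow> j < length ps \<Longrightarrow> ps ! i = ps ! j \<longleftrightarrow> i = j"
  by (meson isperm_def nth_eq_iff_index_eq)

lemma GE_vid: "a \<le> D \<Longrightarrow> b \<le> D \<Longrightarrow> GE D ps (vid D x a) (vid D y b) \<longleftrightarrow> x < length ps \<and> y < length ps \<and>
   ((x = y \<and> (a = 0) \<noteq> (b = 0)) \<or> (a = b \<and> a \<noteq> 0 \<and> (pos ps y = Suc (pos ps x) \<or> pos ps x = Suc (pos ps y))))"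
proof -
  assume ab: "a \<le> D" "b \<le> D"
  have r: "(1 \<le> vid D x a \<and> vid D x a \<le> length ps * Suc D \<and> 1 \<le> vid D y b \<and> vid D y b \<le> length ps * Suc D)
     \<longleftrightarrow> x < length ps \<and> y < length ps"
    using vid_le[OF ab(1), of x "length ps"] vid_le[OF ab(2), of y "length ps"] vid_ge1 by blast
  show ?thesis unfolding GE_def lab_vid[OF ab(1)] lab_vid[OF ab(2)] sb_vid[OF ab(1)] sb_vid[OF ab(2)] using r by blast
qed

definition P :: "nat \<Rightarrow> nat list \<Rightarrow> nat \<Rightarrow> nat \<Rightarrow> nat" where "P D ps p a = vid D (ps ! p) a"

lemma GE_P: "isperm ps \<Longrightarrow> p < length ps \<Longrightarrow> q < length ps \<Longrightarrow> a \<le> D \<Longrightarrow> b \<le> D \<Longrightarrow>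
  GE D ps (P D ps p a) (P D ps q b) \<longleftrightarrow> (p = q \<and> (a = 0) \<noteq> (b = 0)) \<or> (a = b \<and> a \<noteq> 0 \<and> (q = Suc p \<or> p = Suc q))"
  unfolding P_def by (simp add: GE_vid nth_lt pos_nth nth_inj)

lemma P_inj: "isperm ps \<Longrightarrow> p < length ps \<Longrightarrow> q < length ps \<Longrightarrow> a \<le> D \<Longrightarrow> b \<le> D \<Longrightarrow>
   P D ps p a = P D ps q b \<longleftrightarrow> p = q \<and> a = b"
  unfolding P_def by (simp add: vid_inj nth_inj)

lemma vert_P: "isperm ps \<Longrightarrow> 1 \<le> u \<Longrightarrow> u \<le> length ps * Suc D \<Longrightarrow> \<exists>p<length ps. \<exists>a\<le>D. u = P D ps p a"
proof -
  assume h: "isperm ps" "1 \<le> u" "u \<le> length ps * Suc D"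
  from vid_surj[OF h(2,3)] have u: "u = vid D (lab D u) (sb D u)" "lab D u < length ps" "sb D u \<le> D" by auto
  from nth_pos[OF h(1) u(2)] show ?thesis unfolding P_def using u by metis
qed

lemma GE_range: "GE D ps u v \<Longrightarrow> 1 \<le> u \<and> u \<le> length ps * Suc D \<and> 1 \<le> v \<and> v \<le> length ps * Suc D"
  unfolding GE_def by simp

lemma GE_sym: "GE D ps u v \<Longrightarrow> GE D ps v u"
  unfolding GE_def by auto

lemma GE_irr: "GE D ps u v \<Longrightarrow> u \<noteq> v"
  unfolding GE_def by auto

lemma P_range: "isperm ps \<Longrightarrow> p < length ps \<Longrightarrow> a \<le> D \<Longrightarrow> 1 \<le> P D ps p a \<and> P D ps p a \<le> length ps * Suc D"
  unfolding P_def using vid_le nth_lt vid_ge1 by simp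

lemma colr_P[simp]: "a \<le> D \<Longrightarrow> colr D (P D ps p a) = (a \<noteq> 0)"
  unfolding colr_def P_def by simp

lemma wc: assumes "isperm ps" "D \<ge> 3"
  shows "wc_instance D (length ps * Suc D) (GE D ps) (colr D)"
proof -
  let ?n = "length ps * Suc D"
  have nb: "\<exists>u. GE D ps v u \<and> colr D u \<noteq> colr D v" if vin: "v \<in> {1..?n}" for v
  proof -
    obtain p a where pa: "p < length ps" "a \<le> D" "v = P D ps p a" using vert_P[OF assms(1), of v D] vin by auto
    show ?thesis
    proof (cases "a = 0")
      case True
      then show ?thesis using pa assms GE_P[OF assms(1) pa(1) pa(1), of 0 D 1]
        by (intro exI[of _ "P D ps p 1"]) auto
    next
      case False
      then show ?thesis using pa assms GE_P[OF assms(1) pa(1) pa(1), of a D 0]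
        by (intro exI[of _ "P D ps p 0"]) auto
    qed
  qed
  have deg: "card {u. GE D ps v u} \<le> D" if vin: "v \<in> {1..?n}" for v
  proof -
    obtain p a where pa: "p < length ps" "a \<le> D" "v = P D ps p a" using vert_P[OF assms(1), of v D] vin by auto
    show ?thesis
    proof (cases "a = 0")
      case True
      have "{u. GE D ps v u} \<subseteq> (\<lambda>b. P D ps p b) ` {1..D}"
      proof
        fix u assume "u \<in> {u. GE D ps v u}"
        then have g: "GE D ps v u" by simp
        obtain q b where qb: "q < length ps" "b \<le> D" "u = P D ps q b" using vert_P[OF assms(1)] GE_range[OF g] by blast
        have "p = q \<and> b \<noteq> 0" using g GE_P[OF assms(1) pa(1) qb(1) pa(2) qb(2)] pa qb True by auto
        then show "u \<in> (\<lambda>b. P D ps p b) ` {1..D}" using qb by auto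
      qed
      then have "card {u. GE D ps v u} \<le> card ((\<lambda>b. P D ps p b) ` {1..D})" by (intro card_mono) auto
      also have "\<dots> \<le> D" using card_image_le[of "{1..D}" "\<lambda>b. P D ps p b"] by simp
      finally show ?thesis .
    next
      case False
      have "{u. GE D ps v u} \<subseteq> {P D ps p 0, P D ps (Suc p) a, P D ps (p - 1) a}"
      proof
        fix u assume "u \<in> {u. GE D ps v u}"
        then have g: "GE D ps v u" by simp
        obtain q b where qb: "q < length ps" "b \<le> D" "u = P D ps q b" using vert_P[OF assms(1)] GE_range[OF g] by blast
        have "(p = q \<and> b = 0) \<or> (b = a \<and> (q = Suc p \<or> p = Suc q))" using g GE_P[OF assms(1) pa(1) qb(1) pa(2) qb(2)] pa qb False by auto
        then show "u \<in> {P D ps p 0, P D ps (Suc p) a, P D ps (p - 1) a}" using qb by auto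
      qed
      then have "card {u. GE D ps v u} \<le> card {P D ps p 0, P D ps (Suc p) a, P D ps (p - 1) a}" by (intro card_mono) auto
      also have "\<dots> \<le> 3" by (simp add: card_insert_le_m1)
      finally show ?thesis using assms(2) by simp
    qed
  qed
  have v1: "\<forall>u v. GE D ps u v \<longrightarrow> u \<in> {1..?n} \<and> v \<in> {1..?n} \<and> u \<noteq> v \<and> GE D ps v u"
    using GE_sym GE_irr GE_range atLeastAtMost_iff by metis
  have v2: "\<forall>v\<in>{1..?n}. \<exists>u. GE D ps v u" using nb by blast
  have v3: "\<forall>v\<in>{1..?n}. \<exists>u. GE D ps v u \<and> colr D u \<noteq> colr D v" using nb by blast
  have v4: "\<forall>v\<in>{1..?n}. card {u. GE D ps v u} \<le> D" using deg by blast
  show ?thesis unfolding wc_instance_def valid_graph_def weak_2_colouring_def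
    using v1 v2 v3 v4 by (intro conjI)
qed


lemma reach_pos:
  assumes ip: "isperm ps" and pL: "p < length ps" and aD: "a \<le> D"
  shows "reach_le (GE D ps) r (P D ps p a) u \<Longrightarrow>
     \<exists>q b. q < length ps \<and> b \<le> D \<and> u = P D ps q b \<and> q \<le> p + r \<and> p \<le> q + r"
proof (induction r arbitrary: u)
  case 0
  then show ?case using pL aD by auto
next
  case (Suc r)
  from Suc.prems have "reach_le (GE D ps) r (P D ps p a) u \<or> (\<exists>w. reach_le (GE D ps) r (P D ps p a) w \<and> GE D ps w u)"
    by simp
  then show ?case
  proof
    assume h: "reach_le (GE D ps) r (P D ps p a) u"
    from Suc.IH[OF h] obtain q b where "q < length ps" "b \<le> D" "u = P D ps q b" "q \<le> p + r" "p \<le> q + r" by blast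
    then show ?thesis by (intro exI[of _ q] exI[of _ b]) auto
  next
    assume "\<exists>w. reach_le (GE D ps) r (P D ps p a) w \<and> GE D ps w u"
    then obtain w where w: "reach_le (GE D ps) r (P D ps p a) w" "GE D ps w u" by blast
    obtain q b where qb: "q < length ps" "b \<le> D" "w = P D ps q b" "q \<le> p + r" "p \<le> q + r"
      using Suc.IH[OF w(1)] by blast
    obtain q' b' where qb': "q' < length ps" "b' \<le> D" "u = P D ps q' b'"
      using vert_P[OF ip, of u D] GE_range[OF w(2)] by blast
    have "q' \<le> Suc q \<and> q \<le> Suc q'" using GE_P[OF ip qb(1) qb'(1) qb(2) qb'(2)] w(2) qb qb' by auto
    then show ?thesis using qb qb' by (intro exI[of _ q'] exI[of _ b']) auto
  qed
qed

lemma local_transfer: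
  assumes la: "local_alg D r A" and D3: "D \<ge> 3" and ip: "isperm ps" and ip': "isperm ps'"
    and len: "length ps' = length ps"
    and s: "s + 2 * Suc r < length ps" and s': "s' + 2 * Suc r < length ps"
    and win: "\<forall>i \<le> 2 * Suc r. ps ! (s + i) = ps' ! (s' + i)" and aD: "a \<le> D"
  shows "A (length ps * Suc D) (GE D ps) (colr D) (P D ps (s + Suc r) a) =
         A (length ps * Suc D) (GE D ps') (colr D) (P D ps (s + Suc r) a)"
proof -
  let ?n = "length ps * Suc D"
  let ?v = "P D ps (s + Suc r) a"
  have w1: "wc_instance D ?n (GE D ps) (colr D)" using wc[OF ip D3] .
  have w2: "wc_instance D ?n (GE D ps') (colr D)" using wc[OF ip' D3] len by simp
  have vr: "?v \<in> {1..?n}" using P_range[OF ip _ aD, of "s + Suc r"] s by simp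
  have loc: "(\<forall>w. GE D ps u w = GE D ps' u w) \<and> colr D u = colr D u" if ru: "reach_le (GE D ps) r ?v u" for u
  proof -
    obtain q b where qb: "q < length ps" "b \<le> D" "u = P D ps q b" "q \<le> s + Suc r + r" "s + Suc r \<le> q + r"
      using reach_pos[OF ip _ aD ru] s by auto
    define i where "i = q - s"
    have i: "1 \<le> i" "i + 1 \<le> 2 * Suc r" "q = s + i" using qb unfolding i_def by auto
    define x where "x = ps ! (s + i)"
    have xL: "x < length ps" unfolding x_def using nth_lt[OF ip] s i by simp
    have ux: "u = vid D x b" using qb i unfolding P_def x_def by simp
    have px: "pos ps x = s + i" unfolding x_def using pos_nth[OF ip] s i by simp
    have px': "pos ps' x = s' + i" unfolding x_def using pos_nth[OF ip'] s' i win len by simp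
    have ge: "GE D ps u w = GE D ps' u w" for w
    proof (cases "1 \<le> w \<and> w \<le> ?n")
      case False
      then show ?thesis using GE_range len by metis
    next
      case True
      then have wy: "w = vid D (lab D w) (sb D w)" "lab D w < length ps" "sb D w \<le> D"
        using vid_surj[of w "length ps" D] by auto
      define y where "y = lab D w"
      have yL: "y < length ps" using wy y_def by simp
      have e1: "pos ps y = Suc (pos ps x) \<longleftrightarrow> pos ps' y = Suc (pos ps' x)"
      proof -
        have "pos ps y = Suc (pos ps x) \<longleftrightarrow> y = ps ! (s + (i + 1))"
          using pos_eq_iff[OF ip yL, of "Suc (s + i)"] px s i by simp
        also have "\<dots> \<longleftrightarrow> y = ps' ! (s' + (i + 1))" using win[rule_format, of "i + 1"] i by simp
        also have "\<dots> \<longleftrightarrow> pos ps' y = Suc (pos ps' x)"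
          using pos_eq_iff[OF ip', of y "Suc (s' + i)"] px' s' i yL len by simp
        finally show ?thesis .
      qed
      have e2: "pos ps x = Suc (pos ps y) \<longleftrightarrow> pos ps' x = Suc (pos ps' y)"
      proof -
        have "pos ps x = Suc (pos ps y) \<longleftrightarrow> pos ps y = s + (i - 1)" using px i by auto
        also have "\<dots> \<longleftrightarrow> y = ps ! (s + (i - 1))"
          using pos_eq_iff[OF ip yL, of "s + (i - 1)"] s i by simp
        also have "\<dots> \<longleftrightarrow> y = ps' ! (s' + (i - 1))" using win[rule_format, of "i - 1"] i by simp
        also have "\<dots> \<longleftrightarrow> pos ps' y = s' + (i - 1)"
          using pos_eq_iff[OF ip', of y "s' + (i - 1)"] s' i yL len by simp
        also have "\<dots> \<longleftrightarrow> pos ps' x = Suc (pos ps' y)" using px' i by auto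
        finally show ?thesis .
      qed
      have "GE D ps u w \<longleftrightarrow> GE D ps (vid D x b) (vid D y (sb D w))" using ux wy y_def by simp
      also have "\<dots> \<longleftrightarrow> GE D ps' (vid D x b) (vid D y (sb D w))"
        unfolding GE_vid[OF qb(2) wy(3)] using e1 e2 len by simp
      also have "\<dots> \<longleftrightarrow> GE D ps' u w" using ux wy y_def by simp
      finally show ?thesis .
    qed
    then show ?thesis by simp
  qed
  show ?thesis
    using la[unfolded local_alg_def, rule_format, OF w1 w2 vr] loc by blast
qed


definition canon :: "nat \<Rightarrow> nat set \<Rightarrow> nat list" where
  "canon L S = sorted_list_of_set S @ sorted_list_of_set ({0..<L} - S)"

lemma canon_perm: assumes "S \<subseteq> {0..<L}" shows "isperm (canon L S)" "length (canon L S) = L"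
proof -
  have fS: "finite S" using assms finite_subset by blast
  have d: "distinct (canon L S)" unfolding canon_def using fS by auto
  have st: "set (canon L S) = {0..<L}" unfolding canon_def using fS assms by auto
  have "length (canon L S) = L" using distinct_card[OF d] st by simp
  then show "isperm (canon L S)" "length (canon L S) = L" unfolding isperm_def using d st by auto
qed

lemma canon_nth: "finite S \<Longrightarrow> i < card S \<Longrightarrow> canon L S ! i = sorted_list_of_set S ! i"
  unfolding canon_def by (simp add: nth_append)

lemma concat_len: "(\<forall>xs\<in>set xss. length xs = m) \<Longrightarrow> length (concat xss) = length xss * m"
  by (induction xss) auto

lemma concat_nth: "(\<forall>xs\<in>set xss. length xs = m) \<Longrightarrow> j < length xss \<Longrightarrow> i < m \<Longrightarrow>
   (concat xss @ ys) ! (j * m + i) = xss ! j ! i"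
proof (induction xss arbitrary: j)
  case Nil then show ?case by simp
next
  case (Cons xs xss)
  show ?case
  proof (cases j)
    case 0 then show ?thesis using Cons.prems by (simp add: nth_append)
  next
    case (Suc j')
    have "(concat (xs # xss) @ ys) ! (j * m + i) = (xs @ (concat xss @ ys)) ! (m + (j' * m + i))"
      using Suc by (simp add: algebra_simps)
    also have "\<dots> = (concat xss @ ys) ! (j' * m + i)" using Cons.prems by (simp add: nth_append)
    also have "\<dots> = xss ! j' ! i" using Cons Suc by simp
    finally show ?thesis using Suc by simp
  qed
qed

lemma extract_blocks:
  assumes mpos: "m > 0"
    and R: "\<forall>X. finite X \<longrightarrow> card X \<ge> N \<longrightarrow> (\<exists>H\<subseteq>X. card H = m \<and> Pr H)"
  shows "finite X \<Longrightarrow> \<exists>Hs Q. (\<forall>H\<in>set Hs. card H = m \<and> Pr H) \<and> card Q < N \<and> finite Q \<and>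
     distinct (concat (map sorted_list_of_set Hs) @ sorted_list_of_set Q) \<and>
     set (concat (map sorted_list_of_set Hs) @ sorted_list_of_set Q) = X"
proof (induction "card X" arbitrary: X rule: less_induct)
  case less
  show ?case
  proof (cases "card X < N")
    case True
    then show ?thesis using less.prems by (intro exI[of _ "[]"] exI[of _ X]) auto
  next
    case False
    then obtain H where H: "H \<subseteq> X" "card H = m" "Pr H" using R less.prems by auto
    have fH: "finite H" using H mpos card_ge_0_finite by auto
    have "H \<noteq> {}" using H mpos by auto
    have cX: "card H \<le> card X" using card_mono[OF less.prems H(1)] .
    have "card (X - H) = card X - card H" using card_Diff_subset[OF fH H(1)] .
    then have lt: "card (X - H) < card X" using H(2) mpos cX by linarith
    obtain Hs Q where IH: "(\<forall>H\<in>set Hs. card H = m \<and> Pr H)" "card Q < N" "finite Q"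
      "distinct (concat (map sorted_list_of_set Hs) @ sorted_list_of_set Q)"
      "set (concat (map sorted_list_of_set Hs) @ sorted_list_of_set Q) = X - H"
      using less.hyps[OF lt] less.prems by blast
    show ?thesis
    proof (intro exI[of _ "H # Hs"] exI[of _ Q] conjI)
      show "\<forall>H\<in>set (H # Hs). card H = m \<and> Pr H" using IH H by auto
      show "card Q < N" "finite Q" using IH by auto
      show "distinct (concat (map sorted_list_of_set (H # Hs)) @ sorted_list_of_set Q)"
        using IH(4,5) fH by auto
      show "set (concat (map sorted_list_of_set (H # Hs)) @ sorted_list_of_set Q) = X"
        using IH(5) fH H by auto
    qed
  qed
qed




definition selL :: "nat \<Rightarrow> algorithm \<Rightarrow> nat list \<Rightarrow> nat \<Rightarrow> nat \<Rightarrow> bool" where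
  "selL D A ps p a \<longleftrightarrow> P D ps (p - 1) a \<in> A (length ps * Suc D) (GE D ps) (colr D) (P D ps p a)"
definition selR :: "nat \<Rightarrow> algorithm \<Rightarrow> nat list \<Rightarrow> nat \<Rightarrow> nat \<Rightarrow> bool" where
  "selR D A ps p a \<longleftrightarrow> P D ps (Suc p) a \<in> A (length ps * Suc D) (GE D ps) (colr D) (P D ps p a)"
definition colset :: "nat \<Rightarrow> algorithm \<Rightarrow> nat \<Rightarrow> nat \<Rightarrow> nat set \<Rightarrow> (nat \<times> nat) set" where
  "colset D A L r S = {(a, d). a \<in> {1..D} \<and> d \<in> {0, 1} \<and>
     (if d = 0 then selL D A (canon L S) (Suc r) a else selR D A (canon L S) (Suc r) a)}"

lemma colset_sub: "colset D A L r S \<in> Pow ({1..D} \<times> {0, 1})"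
  unfolding colset_def by auto

definition deep :: "nat \<Rightarrow> nat \<Rightarrow> nat \<Rightarrow> nat \<Rightarrow> bool" where
  "deep m t R q \<longleftrightarrow> q div m < t \<and> R \<le> q mod m \<and> q mod m + R < m"
definition Swin :: "nat set list \<Rightarrow> nat \<Rightarrow> nat \<Rightarrow> nat \<Rightarrow> nat set" where
  "Swin Hs m R q = set (take (2 * R + 1) (drop (q mod m - R) (sorted_list_of_set (Hs ! (q div m)))))"

context
  fixes D r A L m Hs Q ps
  assumes la: "local_alg D r A" and D3: "D \<ge> 3" and mpos: "m > 0"
    and hs: "\<forall>H\<in>set Hs. card H = m \<and>
       (\<forall>S\<in>[H]\<^bsup>(2 * Suc r + 1)\<^esup>. \<forall>T\<in>[H]\<^bsup>(2 * Suc r + 1)\<^esup>. colset D A L r S = colset D A L r T)"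
    and Qf: "finite Q"
    and ps_def: "ps = concat (map sorted_list_of_set Hs) @ sorted_list_of_set Q"
    and psd: "distinct ps" and pss: "set ps = {0..<L}"
    and L2R: "2 * Suc r < L"
begin

lemma lenps: "length ps = L"
  using distinct_card[OF psd] pss by simp

lemma ip: "isperm ps"
  unfolding isperm_def using psd pss lenps by simp

lemma hfin: "H \<in> set Hs \<Longrightarrow> finite H"
proof -
  assume "H \<in> set Hs"
  then have "card H = m" using hs by blast
  then show "finite H" using mpos card_ge_0_finite by auto
qed

lemma len_concat: "length (concat (map sorted_list_of_set Hs)) = length Hs * m"
proof -
  have "\<forall>xs\<in>set (map sorted_list_of_set Hs). length xs = m" using hs by auto
  from concat_len[OF this] show ?thesis by simp
qed

lemma tm_le: "length Hs * m \<le> L"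
  using len_concat lenps unfolding ps_def by simp

lemma block_nth: "j < length Hs \<Longrightarrow> i < m \<Longrightarrow> ps ! (j * m + i) = sorted_list_of_set (Hs ! j) ! i"
proof -
  assume j: "j < length Hs" and i: "i < m"
  have "\<forall>xs\<in>set (map sorted_list_of_set Hs). length xs = m" using hs by auto
  from concat_nth[OF this, of j i "sorted_list_of_set Q"] j i show ?thesis unfolding ps_def by simp
qed

lemma deep_win:
  assumes dq: "deep m (length Hs) (Suc r) q"
  shows "\<forall>i \<le> 2 * Suc r. ps ! (q - Suc r + i) = canon L (Swin Hs m (Suc r) q) ! (0 + i)"
    and "Swin Hs m (Suc r) q \<in> [Hs ! (q div m)]\<^bsup>(2 * Suc r + 1)\<^esup>"
    and "q - Suc r + 2 * Suc r < L" and "Suc r \<le> q"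
    and "Swin Hs m (Suc r) q \<subseteq> {0..<L}"
proof -
  define R where "R = Suc r"
  define j where "j = q div m"
  define i0 where "i0 = q mod m"
  define sl where "sl = sorted_list_of_set (Hs ! j)"
  define W where "W = take (2 * R + 1) (drop (i0 - R) sl)"
  have jt: "j < length Hs" and i0: "R \<le> i0" "i0 + R < m" using dq unfolding deep_def j_def i0_def R_def by auto
  have Hj: "Hs ! j \<in> set Hs" using jt by simp
  have fH: "finite (Hs ! j)" using hfin[OF Hj] .
  have lsl: "length sl = m" unfolding sl_def using hs Hj by simp
  have lW: "length W = 2 * R + 1" unfolding W_def using lsl i0 by simp
  have Wn: "W ! i = sl ! (i0 - R + i)" if "i < 2 * R + 1" for i
    unfolding W_def using that lsl i0 by simp
  have q: "q = j * m + i0" unfolding j_def i0_def by simp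
  have psw: "ps ! (q - R + i) = W ! i" if "i \<le> 2 * R" for i
  proof -
    have "q - R + i = j * m + (i0 - R + i)" using q i0 by simp
    then show ?thesis using block_nth[OF jt, of "i0 - R + i"] Wn[of i] that i0 sl_def by simp
  qed
  have sW: "sorted W" "distinct W" unfolding W_def sl_def by (auto simp: sorted_wrt_take sorted_wrt_drop)
  have slW: "sorted_list_of_set (set W) = W" using sW by (simp add: sorted_list_of_set.idem_if_sorted_distinct)
  have cW: "card (set W) = 2 * R + 1" using distinct_card[OF sW(2)] lW by simp
  have WH: "set W \<subseteq> Hs ! j" unfolding W_def sl_def using fH
    by (metis in_set_dropD in_set_takeD set_sorted_list_of_set subsetI)
  have Sw: "Swin Hs m (Suc r) q = set W" unfolding Swin_def W_def sl_def R_def j_def i0_def by simp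
  show "\<forall>i \<le> 2 * Suc r. ps ! (q - Suc r + i) = canon L (Swin Hs m (Suc r) q) ! (0 + i)"
    using psw canon_nth[of "set W" _ L] cW slW Sw R_def by simp
  show "Swin Hs m (Suc r) q \<in> [Hs ! (q div m)]\<^bsup>(2 * Suc r + 1)\<^esup>"
    using Sw WH cW unfolding nsets_def R_def j_def by auto
  have "Suc (j * m + i0 + R) \<le> Suc j * m" using i0 by simp
  also have "\<dots> \<le> length Hs * m" using jt by (intro mult_le_mono1) simp
  finally have "q + R < L" using tm_le q by linarith
  moreover have "q - Suc r + 2 * Suc r = q + R" using q i0 R_def by simp
  ultimately show "q - Suc r + 2 * Suc r < L" by simp
  show "Suc r \<le> q" using q i0 R_def by simp
  have "Hs ! j = set (sorted_list_of_set (Hs ! j))" using fH by simp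
  also have "\<dots> \<subseteq> set ps" unfolding ps_def using Hj by auto
  finally show "Swin Hs m (Suc r) q \<subseteq> {0..<L}" using Sw WH pss by auto
qed

lemma sel_transfer:
  assumes dq: "deep m (length Hs) (Suc r) q" and aD: "a \<le> D"
  shows "selL D A ps q a \<longleftrightarrow> selL D A (canon L (Swin Hs m (Suc r) q)) (Suc r) a"
    and "selR D A ps q a \<longleftrightarrow> selR D A (canon L (Swin Hs m (Suc r) q)) (Suc r) a"
proof -
  let ?S = "Swin Hs m (Suc r) q"
  let ?c = "canon L ?S"
  note dw = deep_win[OF dq]
  have cp: "isperm ?c" "length ?c = L" using canon_perm[OF dw(5)] by auto
  define s where "s = q - Suc r"
  have sq: "s + Suc r = q" using dw(4) s_def by simp
  have win: "\<forall>i \<le> 2 * Suc r. ps ! (s + i) = ?c ! (0 + i)" using dw(1) s_def by simp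
  have s2: "s + 2 * Suc r < length ps" using dw(3) s_def lenps by simp
  have s2': "0 + 2 * Suc r < length ps" using L2R lenps by simp
  have Aeq: "A (length ps * Suc D) (GE D ps) (colr D) (P D ps (s + Suc r) a) =
             A (length ps * Suc D) (GE D ?c) (colr D) (P D ps (s + Suc r) a)"
    using local_transfer[OF la D3 ip cp(1) _ s2 s2' win aD] cp(2) lenps by simp
  have e0: "ps ! q = ?c ! Suc r" using win[rule_format, of "Suc r"] sq by simp
  have qq: "q - 1 = s + r" using sq by simp
  have e1: "ps ! (q - 1) = ?c ! (Suc r - 1)" using win[rule_format, of r] unfolding qq by simp
  have e2: "ps ! Suc q = ?c ! Suc (Suc r)" using win[rule_format, of "Suc (Suc r)"] sq by simp
  have nn: "length ?c * Suc D = length ps * Suc D" using cp(2) lenps by simp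
  show "selL D A ps q a \<longleftrightarrow> selL D A ?c (Suc r) a"
    unfolding selL_def nn using Aeq sq e0 e1 unfolding P_def by simp
  show "selR D A ps q a \<longleftrightarrow> selR D A ?c (Suc r) a"
    unfolding selR_def nn using Aeq sq e0 e2 unfolding P_def by simp
qed

lemma divmod_blk: "i < m \<Longrightarrow> (j * m + i) div m = j \<and> (j * m + i) mod m = i"
  by simp

lemma no_mid:
  assumes dp: "deep m (length Hs) (Suc (Suc r)) p" and a: "1 \<le> a" "a \<le> D"
    and mt: "matching (GE D ps) (output_edges A (L * Suc D) (GE D ps) (colr D))"
    and s1: "P D ps (Suc p) a \<in> A (L * Suc D) (GE D ps) (colr D) (P D ps p a)"
    and s2: "P D ps p a \<in> A (L * Suc D) (GE D ps) (colr D) (P D ps (Suc p) a)"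
  shows False
proof -
  define j where "j = p div m"
  define i0 where "i0 = p mod m"
  have jt: "j < length Hs" and i0: "Suc (Suc r) \<le> i0" "i0 + Suc (Suc r) < m"
    using dp unfolding deep_def j_def i0_def by auto
  have p: "p = j * m + i0" unfolding j_def i0_def by simp
  have pm1: "p - 1 = j * m + (i0 - 1)" using p i0 by simp
  have pp1: "Suc p = j * m + (i0 + 1)" using p by simp
  have d0: "deep m (length Hs) (Suc r) (p - 1)" unfolding deep_def pm1 using divmod_blk[of "i0 - 1" j] i0 jt by simp
  have d1: "deep m (length Hs) (Suc r) p" unfolding deep_def p using divmod_blk[of i0 j] i0 jt by simp
  have d2: "deep m (length Hs) (Suc r) (Suc p)" unfolding deep_def pp1 using divmod_blk[of "i0 + 1" j] i0 jt by simp
  have b0: "(p - 1) div m = j" and b1: "p div m = j" and b2: "Suc p div m = j"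
    using divmod_blk[of "i0 - 1" j] divmod_blk[of i0 j] divmod_blk[of "i0 + 1" j] i0 pm1 p pp1 by auto
  have Hj: "Hs ! j \<in> set Hs" using jt by simp
  have hom: "\<forall>S\<in>[Hs ! j]\<^bsup>(2 * Suc r + 1)\<^esup>. \<forall>T\<in>[Hs ! j]\<^bsup>(2 * Suc r + 1)\<^esup>. colset D A L r S = colset D A L r T"
    using hs Hj by blast
  have c01: "colset D A L r (Swin Hs m (Suc r) (p - 1)) = colset D A L r (Swin Hs m (Suc r) p)"
    using hom deep_win(2)[OF d0] deep_win(2)[OF d1] b0 b1 by metis
  have c12: "colset D A L r (Swin Hs m (Suc r) (Suc p)) = colset D A L r (Swin Hs m (Suc r) p)"
    using hom deep_win(2)[OF d2] deep_win(2)[OF d1] b2 b1 by metis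
  have mem: "(a, d) \<in> colset D A L r S \<longleftrightarrow> (if d = 0 then selL D A (canon L S) (Suc r) a else selR D A (canon L S) (Suc r) a)"
    if "d \<in> {0, 1}" for d S using that a unfolding colset_def by auto
  have "selR D A ps p a" using s1 lenps unfolding selR_def by simp
  then have "(a, 1) \<in> colset D A L r (Swin Hs m (Suc r) p)" using sel_transfer(2)[OF d1 a(2)] mem[of 1] by simp
  then have "(a, 1) \<in> colset D A L r (Swin Hs m (Suc r) (p - 1))" using c01 by simp
  then have "selR D A ps (p - 1) a" using sel_transfer(2)[OF d0 a(2)] mem[of 1] by simp
  moreover have p1: "1 \<le> p" using p i0 by simp
  ultimately have t1: "P D ps p a \<in> A (L * Suc D) (GE D ps) (colr D) (P D ps (p - 1) a)"
    unfolding selR_def using lenps by simp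
  have "selL D A ps (Suc p) a" using s2 lenps unfolding selL_def by simp
  then have "(a, 0) \<in> colset D A L r (Swin Hs m (Suc r) (Suc p))" using sel_transfer(1)[OF d2 a(2)] mem[of 0] by simp
  then have "(a, 0) \<in> colset D A L r (Swin Hs m (Suc r) p)" using c12 by simp
  then have "selL D A ps p a" using sel_transfer(1)[OF d1 a(2)] mem[of 0] by simp
  then have t2: "P D ps (p - 1) a \<in> A (L * Suc D) (GE D ps) (colr D) (P D ps p a)"
    unfolding selL_def using lenps by simp
  have sL: "Suc p < L" using deep_win(3)[OF d2] by simp
  have g1: "GE D ps (P D ps (p - 1) a) (P D ps p a)"
    using GE_P[OF ip, of "p - 1" p a D a] lenps sL p1 a by simp
  have g2: "GE D ps (P D ps p a) (P D ps (Suc p) a)"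
    using GE_P[OF ip, of p "Suc p" a D a] lenps sL a by simp
  let ?e1 = "{P D ps (p - 1) a, P D ps p a}"
  let ?e2 = "{P D ps p a, P D ps (Suc p) a}"
  have o1: "?e1 \<in> output_edges A (L * Suc D) (GE D ps) (colr D)"
    unfolding output_edges_def using g1 t1 t2 by blast
  have o2: "?e2 \<in> output_edges A (L * Suc D) (GE D ps) (colr D)"
    unfolding output_edges_def using g2 s1 s2 by blast
  have ne1: "P D ps (p - 1) a \<noteq> P D ps p a" using P_inj[OF ip, of "p - 1" p a D a] lenps sL p1 a by simp
  have ne2: "P D ps (p - 1) a \<noteq> P D ps (Suc p) a" using P_inj[OF ip, of "p - 1" "Suc p" a D a] lenps sL p1 a by simp
  have neq: "?e1 \<noteq> ?e2" using ne1 ne2 by auto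
  have dj: "\<forall>e\<in>output_edges A (L * Suc D) (GE D ps) (colr D). \<forall>f\<in>output_edges A (L * Suc D) (GE D ps) (colr D). e \<noteq> f \<longrightarrow> e \<inter> f = {}"
    using mt unfolding matching_def by (rule conjunct2)
  have "?e1 \<inter> ?e2 = {}" using dj[rule_format, OF o1 o2 neq] .
  moreover have "?e1 \<inter> ?e2 \<noteq> {}" by simp
  ultimately show False by contradiction
qed


lemma out_meets:
  assumes mt: "matching (GE D ps) (output_edges A (L * Suc D) (GE D ps) (colr D))"
    and e: "e \<in> output_edges A (L * Suc D) (GE D ps) (colr D)"
  shows "e \<inter> ((\<lambda>p. P D ps p 0) ` {..<L} \<union>
     (\<lambda>(p, a). P D ps p a) ` ({p. p < L \<and> \<not> deep m (length Hs) (Suc (Suc r)) p} \<times> {1..D})) \<noteq> {}"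
    (is "e \<inter> ?T \<noteq> {}")
proof -
  obtain u v where uv: "e = {u, v}" "GE D ps u v" "v \<in> A (L * Suc D) (GE D ps) (colr D) u"
    "u \<in> A (L * Suc D) (GE D ps) (colr D) v"
    using e unfolding output_edges_def by blast
  obtain p a where pa: "p < L" "a \<le> D" "u = P D ps p a" using vert_P[OF ip, of u D] GE_range[OF uv(2)] lenps by auto
  obtain q b where qb: "q < L" "b \<le> D" "v = P D ps q b" using vert_P[OF ip, of v D] GE_range[OF uv(2)] lenps by auto
  have g: "(p = q \<and> (a = 0) \<noteq> (b = 0)) \<or> (a = b \<and> a \<noteq> 0 \<and> (q = Suc p \<or> p = Suc q))"
    using GE_P[OF ip, of p q a D b] uv(2) pa qb lenps by simp
  show ?thesis
  proof (cases "a = 0 \<or> b = 0")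
    case True
    then show ?thesis
    proof
      assume "a = 0" then have "u \<in> ?T" using pa by auto
      then show ?thesis using uv(1) by blast
    next
      assume "b = 0" then have "v \<in> ?T" using qb by auto
      then show ?thesis using uv(1) by blast
    qed
  next
    case False
    then have ab: "a = b" "1 \<le> a" and qp: "q = Suc p \<or> p = Suc q" using g by auto
    from qp show ?thesis
    proof
      assume q: "q = Suc p"
      show ?thesis
      proof (cases "deep m (length Hs) (Suc (Suc r)) p")
        case True
        have False using no_mid[OF True ab(2) pa(2) mt] uv(3,4) pa(3) qb(3) q ab(1) by simp
        then show ?thesis ..
      next
        case False
        then have "u \<in> ?T" using pa ab by auto
        then show ?thesis using uv(1) by blast
      qed
    next
      assume p: "p = Suc q"
      show ?thesis
      proof (cases "deep m (length Hs) (Suc (Suc r)) q")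
        case True
        have False using no_mid[OF True, of a] ab pa(2) mt uv(3,4) pa(3) qb(3) p by simp
        then show ?thesis ..
      next
        case False
        then have "v \<in> ?T" using qb ab by auto
        then show ?thesis using uv(1) by blast
      qed
    qed
  qed
qed

end

lemma match_card:
  assumes mt: "matching E M" and fT: "finite T" and me: "\<forall>e\<in>M. e \<inter> T \<noteq> {}"
  shows "card M \<le> card T"
proof -
  define f where "f e = (SOME x. x \<in> e \<inter> T)" for e
  have fe: "f e \<in> e \<inter> T" if "e \<in> M" for e
    unfolding f_def using me that by (metis all_not_in_conv someI_ex)
  have dj: "\<forall>e\<in>M. \<forall>g\<in>M. e \<noteq> g \<longrightarrow> e \<inter> g = {}" using mt unfolding matching_def by (rule conjunct2)
  have inj: "inj_on f M"
  proof (rule inj_onI)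
    fix e g assume eg: "e \<in> M" "g \<in> M" "f e = f g"
    show "e = g"
    proof (rule ccontr)
      assume "e \<noteq> g"
      then have "e \<inter> g = {}" using dj eg by blast
      moreover have "f e \<in> e \<inter> g" using fe[OF eg(1)] fe[OF eg(2)] eg(3) by simp
      ultimately show False by blast
    qed
  qed
  have "f ` M \<subseteq> T" using fe by blast
  from card_inj_on_le[OF inj this fT] show ?thesis .
qed

lemma bad_card:
  assumes tm: "t * m \<le> L" and mpos: "m > 0"
  shows "card {p. p < L \<and> \<not> deep m t K p} \<le> t * (2 * K) + (L - t * m)"
proof -
  define g where "g = (\<lambda>(j, i). j * m + (if i < K then i else m - K + (i - K)))"
  have sub: "{p. p < L \<and> \<not> deep m t K p} \<subseteq> g ` ({..<t} \<times> {..<2 * K}) \<union> {t * m..<L}"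
  proof
    fix p assume "p \<in> {p. p < L \<and> \<not> deep m t K p}"
    then have pL: "p < L" and nd: "\<not> deep m t K p" by auto
    show "p \<in> g ` ({..<t} \<times> {..<2 * K}) \<union> {t * m..<L}"
    proof (cases "t * m \<le> p")
      case True then show ?thesis using pL by auto
    next
      case False
      define j where "j = p div m"
      define i0 where "i0 = p mod m"
      have jt: "j < t" unfolding j_def using False by (metis less_mult_imp_div_less not_le)
      have p: "p = j * m + i0" unfolding j_def i0_def by simp
      have i0m: "i0 < m" unfolding i0_def using mpos by simp
      have c: "\<not> (K \<le> i0 \<and> i0 + K < m)" using nd jt unfolding deep_def j_def i0_def by auto
      show ?thesis
      proof (cases "i0 < K")
        case True
        have "g (j, i0) = p" unfolding g_def using True p by simp
        moreover have "(j, i0) \<in> {..<t} \<times> {..<2 * K}" using jt True by simp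
        ultimately show ?thesis by (metis UnI1 image_eqI)
      next
        case False
        then have h: "K \<le> i0" "m \<le> i0 + K" using c by auto
        define i where "i = K + (i0 - (m - K))"
        have iK: "\<not> i < K" "i < 2 * K" unfolding i_def using h i0m by auto
        have "g (j, i) = j * m + (m - K + (i - K))" unfolding g_def using iK by simp
        also have "\<dots> = p" unfolding i_def using p h i0m by simp
        finally have "g (j, i) = p" .
        moreover have "(j, i) \<in> {..<t} \<times> {..<2 * K}" using jt iK by simp
        ultimately show ?thesis by (metis UnI1 image_eqI)
      qed
    qed
  qed
  have "card {p. p < L \<and> \<not> deep m t K p} \<le> card (g ` ({..<t} \<times> {..<2 * K}) \<union> {t * m..<L})"
    by (rule card_mono[OF _ sub]) simp
  also have "\<dots> \<le> card (g ` ({..<t} \<times> {..<2 * K})) + card {t * m..<L}" by (rule card_Un_le)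
  also have "\<dots> \<le> card ({..<t} \<times> {..<2 * K}) + card {t * m..<L}"
    using card_image_le[of "{..<t} \<times> {..<2 * K}" g] by simp
  also have "\<dots> = t * (2 * K) + (L - t * m)" by (simp add: card_cartesian_product)
  finally show ?thesis .
qed


lemma opt_bound:
  assumes ip: "isperm ps" and ev: "even (length ps)" and D2: "2 \<le> D"
  shows "length ps + (D - 1) * (length ps div 2) \<le> max_matching_size (GE D ps)"
proof -
  define L where "L = length ps"
  define h where "h = L div 2"
  have Lh: "L = 2 * h" using ev unfolding h_def L_def by simp
  define M1 where "M1 = (\<lambda>p. {P D ps p 0, P D ps p 1}) ` {..<L}"
  define M2 where "M2 = (\<lambda>(i, a). {P D ps (2 * i) a, P D ps (Suc (2 * i)) a}) ` ({..<h} \<times> {2..D})"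
  have PI: "P D ps p a = P D ps q b \<longleftrightarrow> p = q \<and> a = b" if "p < L" "q < L" "a \<le> D" "b \<le> D" for p q a b
    using P_inj[OF ip that[unfolded L_def]] .
  have M1e: "e \<in> M1 \<longleftrightarrow> (\<exists>p<L. e = {P D ps p 0, P D ps p 1})" for e unfolding M1_def by auto
  have M2e: "e \<in> M2 \<longleftrightarrow> (\<exists>i<h. \<exists>a. 2 \<le> a \<and> a \<le> D \<and> e = {P D ps (2 * i) a, P D ps (Suc (2 * i)) a})" for e
  proof
    assume "e \<in> M2"
    then obtain x where x: "x \<in> {..<h} \<times> {2..D}" "e = (\<lambda>(i, a). {P D ps (2 * i) a, P D ps (Suc (2 * i)) a}) x"
      unfolding M2_def by blast
    then show "\<exists>i<h. \<exists>a. 2 \<le> a \<and> a \<le> D \<and> e = {P D ps (2 * i) a, P D ps (Suc (2 * i)) a}" by (cases x) auto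
  next
    assume "\<exists>i<h. \<exists>a. 2 \<le> a \<and> a \<le> D \<and> e = {P D ps (2 * i) a, P D ps (Suc (2 * i)) a}"
    then obtain i a where ia: "i < h" "2 \<le> a" "a \<le> D" "e = {P D ps (2 * i) a, P D ps (Suc (2 * i)) a}" by blast
    then show "e \<in> M2" unfolding M2_def by (intro image_eqI[of _ _ "(i, a)"]) auto
  qed
  have edg: "M1 \<union> M2 \<subseteq> edges (GE D ps)"
  proof
    fix e assume "e \<in> M1 \<union> M2"
    then show "e \<in> edges (GE D ps)"
    proof
      assume "e \<in> M1"
      then obtain p where p: "p < L" "e = {P D ps p 0, P D ps p 1}" using M1e by blast
      have "GE D ps (P D ps p 0) (P D ps p 1)" using GE_P[OF ip, of p p 0 D 1] p D2 L_def by simp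
      then show ?thesis unfolding edges_def using p by blast
    next
      assume "e \<in> M2"
      then obtain i a where ia: "i < h" "2 \<le> a" "a \<le> D" "e = {P D ps (2 * i) a, P D ps (Suc (2 * i)) a}" using M2e by blast
      have "GE D ps (P D ps (2 * i) a) (P D ps (Suc (2 * i)) a)" using GE_P[OF ip, of "2 * i" "Suc (2 * i)" a D a] ia Lh L_def by simp
      then show ?thesis unfolding edges_def using ia by blast
    qed
  qed
  have disj: "e \<inter> f = {}" if ef: "e \<in> M1 \<union> M2" "f \<in> M1 \<union> M2" "e \<noteq> f" for e f
  proof (rule ccontr)
    assume "e \<inter> f \<noteq> {}"
    then obtain x where x: "x \<in> e" "x \<in> f" by blast
    have r1: "\<exists>p a. x = P D ps p a \<and> p < L \<and> a \<le> D \<and> (e = {P D ps p 0, P D ps p 1} \<and> a \<le> 1 \<or>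
        (\<exists>i. p div 2 = i \<and> i < h \<and> 2 \<le> a \<and> e = {P D ps (2 * i) a, P D ps (Suc (2 * i)) a}))"
      if "x \<in> e" "e \<in> M1 \<union> M2" for e
    proof -
      from that(2) show ?thesis
      proof
        assume "e \<in> M1"
        then obtain p where p: "p < L" "e = {P D ps p 0, P D ps p 1}" using M1e by blast
        then have "x = P D ps p 0 \<or> x = P D ps p 1" using that(1) by auto
        then show ?thesis
        proof
          assume "x = P D ps p 0" then show ?thesis using p by (intro exI[of _ p] exI[of _ 0]) auto
        next
          assume "x = P D ps p 1" then show ?thesis using p D2 by (intro exI[of _ p] exI[of _ 1]) auto
        qed
      next
        assume "e \<in> M2"
        then obtain i a where ia: "i < h" "2 \<le> a" "a \<le> D" "e = {P D ps (2 * i) a, P D ps (Suc (2 * i)) a}" using M2e by blast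
        then have "x = P D ps (2 * i) a \<or> x = P D ps (Suc (2 * i)) a" using that(1) by auto
        then show ?thesis
        proof
          assume "x = P D ps (2 * i) a" then show ?thesis using ia Lh by (intro exI[of _ "2 * i"] exI[of _ a]) auto
        next
          assume "x = P D ps (Suc (2 * i)) a" then show ?thesis using ia Lh by (intro exI[of _ "Suc (2 * i)"] exI[of _ a]) auto
        qed
      qed
    qed
    obtain p a where pa: "x = P D ps p a" "p < L" "a \<le> D" "e = {P D ps p 0, P D ps p 1} \<and> a \<le> 1 \<or>
        (\<exists>i. p div 2 = i \<and> i < h \<and> 2 \<le> a \<and> e = {P D ps (2 * i) a, P D ps (Suc (2 * i)) a})"
      using r1[OF x(1) ef(1)] by blast
    obtain q b where qb: "x = P D ps q b" "q < L" "b \<le> D" "f = {P D ps q 0, P D ps q 1} \<and> b \<le> 1 \<or>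
        (\<exists>i. q div 2 = i \<and> i < h \<and> 2 \<le> b \<and> f = {P D ps (2 * i) b, P D ps (Suc (2 * i)) b})"
      using r1[OF x(2) ef(2)] by blast
    have "p = q \<and> a = b" using PI[OF pa(2) qb(2) pa(3) qb(3)] pa(1) qb(1) by simp
    then have "e = f" using pa(4) qb(4) by auto
    then show False using ef(3) by simp
  qed
  have mt: "matching (GE D ps) (M1 \<union> M2)" unfolding matching_def using edg disj by blast
  have inj1: "inj_on (\<lambda>p. {P D ps p 0, P D ps p 1}) {..<L}"
  proof (rule inj_onI)
    fix p q assume pq: "p \<in> {..<L}" "q \<in> {..<L}" "{P D ps p 0, P D ps p 1} = {P D ps q 0, P D ps q 1}"
    then have "P D ps p 0 \<in> {P D ps q 0, P D ps q 1}" by blast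
    then show "p = q" using PI[of p q 0 0] PI[of p q 0 1] pq D2 by auto
  qed
  have inj2: "inj_on (\<lambda>(i, a). {P D ps (2 * i) a, P D ps (Suc (2 * i)) a}) ({..<h} \<times> {2..D})"
  proof (rule inj_onI, clarsimp)
    fix i a j b assume ia: "i < h" "2 \<le> a" "a \<le> D" "j < h" "2 \<le> b" "b \<le> D"
      and eq: "{P D ps (2 * i) a, P D ps (Suc (2 * i)) a} = {P D ps (2 * j) b, P D ps (Suc (2 * j)) b}"
    then have "P D ps (2 * i) a \<in> {P D ps (2 * j) b, P D ps (Suc (2 * j)) b}" by blast
    then have "(2 * i = 2 * j \<and> a = b) \<or> (2 * i = Suc (2 * j) \<and> a = b)"
      using PI[of "2 * i" "2 * j" a b] PI[of "2 * i" "Suc (2 * j)" a b] ia Lh by auto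
    then show "i = j \<and> a = b" by presburger
  qed
  have d12: "M1 \<inter> M2 = {}"
  proof (rule ccontr)
    assume "M1 \<inter> M2 \<noteq> {}"
    then obtain e where "e \<in> M1" "e \<in> M2" by blast
    then obtain p i a where "p < L" "i < h" "2 \<le> a" "a \<le> D" "{P D ps p 0, P D ps p 1} = {P D ps (2 * i) a, P D ps (Suc (2 * i)) a}"
      using M1e M2e by metis
    moreover then have "P D ps p 0 \<in> {P D ps (2 * i) a, P D ps (Suc (2 * i)) a}" by blast
    ultimately show False using PI[of p "2 * i" 0 a] PI[of p "Suc (2 * i)" 0 a] Lh by auto
  qed
  have c1: "card M1 = L" unfolding M1_def using card_image[OF inj1] by simp
  have c2: "card M2 = h * (D - 1)" unfolding M2_def using card_image[OF inj2] by (simp add: card_cartesian_product)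
  have fin1: "finite M1" "finite M2" unfolding M1_def M2_def by auto
  have cM: "card (M1 \<union> M2) = L + (D - 1) * h" using card_Un_disjoint[OF fin1 d12] c1 c2 by simp
  have fe: "finite (edges (GE D ps))"
  proof -
    have "edges (GE D ps) \<subseteq> Pow {1..L * Suc D}" unfolding edges_def using GE_range L_def by fastforce
    then show ?thesis using finite_subset by blast
  qed
  have fM: "finite {M. matching (GE D ps) M}"
    by (rule finite_subset[of _ "Pow (edges (GE D ps))"]) (use fe in \<open>auto simp: matching_def\<close>)
  have "card (M1 \<union> M2) \<le> max_matching_size (GE D ps)" unfolding max_matching_size_def
    using fM mt by (intro Max_ge) auto
  then show ?thesis using cM L_def h_def by simp
qed


lemma ramsey_hom:
  fixes U :: "'c set"
  assumes "finite U"
  shows "\<exists>N. \<forall>(col :: nat set \<Rightarrow> 'c) X. (\<forall>S. col S \<in> U) \<longrightarrow> finite X \<longrightarrow> card X \<ge> N \<longrightarrow>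
           (\<exists>H\<subseteq>X. card H = m \<and> (\<forall>S\<in>[H]\<^bsup>k\<^esup>. \<forall>T\<in>[H]\<^bsup>k\<^esup>. col S = col T))"
proof -
  define K where "K = card U"
  obtain h where h: "bij_betw h U {0..<K}" using ex_bij_betw_finite_nat[OF assms] K_def by blast
  obtain N :: nat where N: "partn_lst {..<N} (replicate K m) k" using ramsey_full by blast
  show ?thesis
  proof (rule exI[of _ N], intro allI impI)
    fix col :: "nat set \<Rightarrow> 'c" and X :: "nat set"
    assume cU: "\<forall>S. col S \<in> U" and fX: "finite X" and cX: "N \<le> card X"
    obtain g where g: "bij_betw g {0..<card X} X" using ex_bij_betw_nat_finite[OF fX] by blast
    have ginj: "inj_on g {..<N}" using g cX
      by (metis atLeast0LessThan bij_betw_def inj_on_subset lessThan_subset_iff)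
    have gim: "g ` {..<N} \<subseteq> X" using g cX
      by (metis atLeast0LessThan bij_betw_def image_mono lessThan_subset_iff)
    define f where "f T = h (col (g ` T))" for T
    have fK: "f \<in> [{..<N}]\<^bsup>k\<^esup> \<rightarrow> {..<length (replicate K m)}"
      using h cU unfolding f_def bij_betw_def by auto
    obtain i H' where i: "i < length (replicate K m)" and H': "H' \<in> [{..<N}]\<^bsup>(replicate K m ! i)\<^esup>"
      and hom: "f ` [H']\<^bsup>k\<^esup> \<subseteq> {i}"
      using partn_lstE[OF N fK] by blast
    have H'm: "H' \<subseteq> {..<N}" "finite H'" "card H' = m" using H' i by (auto simp: nsets_def)
    have ginjH: "inj_on g H'" using ginj H'm(1) inj_on_subset by blast
    have key: "col S = col T" if ST: "S \<in> [g ` H']\<^bsup>k\<^esup>" "T \<in> [g ` H']\<^bsup>k\<^esup>" for S T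
    proof -
      obtain Y where Y: "Y \<in> [H']\<^bsup>k\<^esup>" "S = g ` Y" using nset_image_obtains[OF ST(1) ginjH] by metis
      obtain Z where Z: "Z \<in> [H']\<^bsup>k\<^esup>" "T = g ` Z" using nset_image_obtains[OF ST(2) ginjH] by metis
      have "h (col S) = h (col T)" using hom Y Z unfolding f_def by auto
      thus ?thesis using h cU unfolding bij_betw_def inj_on_def by blast
    qed
    show "\<exists>H\<subseteq>X. card H = m \<and> (\<forall>S\<in>[H]\<^bsup>k\<^esup>. \<forall>T\<in>[H]\<^bsup>k\<^esup>. col S = col T)"
    proof (rule exI[of _ "g ` H'"], intro conjI)
      show "g ` H' \<subseteq> X" using gim H'm(1) by blast
      show "card (g ` H') = m" using card_image[OF ginjH] H'm(3) by simp
      show "\<forall>S\<in>[g ` H']\<^bsup>k\<^esup>. \<forall>T\<in>[g ` H']\<^bsup>k\<^esup>. col S = col T" using key by blast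
    qed
  qed
qed


theorem theorem4:
  fixes \<Delta> :: nat and \<epsilon> :: real
  assumes "\<Delta> \<ge> 3" and "\<epsilon> > 0"
  shows "\<not> (\<exists>(r::nat) (A::algorithm). local_alg \<Delta> r A \<and>
             approx_matching_alg \<Delta> ((real \<Delta> + 1) / 2 - \<epsilon>) A)"
proof
  assume "\<exists>(r::nat) (A::algorithm). local_alg \<Delta> r A \<and> approx_matching_alg \<Delta> ((real \<Delta> + 1) / 2 - \<epsilon>) A"
  then obtain r A where la: "local_alg \<Delta> r A" and ap: "approx_matching_alg \<Delta> ((real \<Delta> + 1) / 2 - \<epsilon>) A"
    by blast
  note D3 = assms(1) and ep = assms(2)
  define \<alpha> where "\<alpha> = (real \<Delta> + 1) / 2 - \<epsilon>"
  define K where "K = Suc (Suc r)"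
  define U where "U = Pow ({1..\<Delta>} \<times> {0, 1::nat})"
  define c0 where "c0 = real \<Delta> * (real \<Delta> + 1)"
  have c0: "c0 \<ge> 0" unfolding c0_def by simp
  define m where "m = nat \<lceil>c0 * real (2 * K) / \<epsilon>\<rceil> + 1"
  have mpos: "m > 0" unfolding m_def by simp
  have mbig: "c0 * real (2 * K) \<le> \<epsilon> * real m"
  proof -
    have "c0 * real (2 * K) / \<epsilon> \<le> real m" unfolding m_def by linarith
    then show ?thesis using ep by (simp add: field_simps)
  qed
  have fU: "finite U" unfolding U_def by simp
  obtain N where N: "\<forall>(col :: nat set \<Rightarrow> (nat \<times> nat) set) X. (\<forall>S. col S \<in> U) \<longrightarrow> finite X \<longrightarrow> card X \<ge> N \<longrightarrow>
           (\<exists>H\<subseteq>X. card H = m \<and> (\<forall>S\<in>[H]\<^bsup>(2 * Suc r + 1)\<^esup>. \<forall>T\<in>[H]\<^bsup>(2 * Suc r + 1)\<^esup>. col S = col T))"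
    using ramsey_hom[OF fU, of m "2 * Suc r + 1"] by blast
  define L where "L = 2 * (nat \<lceil>c0 * real N / \<epsilon>\<rceil> + Suc r + 1)"
  have Lbig: "2 * (c0 * real N) \<le> \<epsilon> * real L"
  proof -
    have "c0 * real N / \<epsilon> \<le> real (nat \<lceil>c0 * real N / \<epsilon>\<rceil>)" by linarith
    then have "2 * (c0 * real N / \<epsilon>) \<le> real L" unfolding L_def by simp
    then show ?thesis using ep by (simp add: field_simps)
  qed
  have L2R: "2 * Suc r < L" unfolding L_def by simp
  have evL: "even L" unfolding L_def by simp
  define col where "col = colset \<Delta> A L r"
  have colU: "\<forall>S. col S \<in> U" unfolding col_def U_def using colset_sub by blast
  have R: "\<forall>X. finite X \<longrightarrow> card X \<ge> N \<longrightarrow> (\<exists>H\<subseteq>X. card H = m \<and>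
      (\<forall>S\<in>[H]\<^bsup>(2 * Suc r + 1)\<^esup>. \<forall>T\<in>[H]\<^bsup>(2 * Suc r + 1)\<^esup>. col S = col T))"
    using N colU by blast
  obtain Hs Q where HQ: "\<forall>H\<in>set Hs. card H = m \<and>
      (\<forall>S\<in>[H]\<^bsup>(2 * Suc r + 1)\<^esup>. \<forall>T\<in>[H]\<^bsup>(2 * Suc r + 1)\<^esup>. col S = col T)"
    "card Q < N" "finite Q"
    "distinct (concat (map sorted_list_of_set Hs) @ sorted_list_of_set Q)"
    "set (concat (map sorted_list_of_set Hs) @ sorted_list_of_set Q) = {0..<L}"
    using extract_blocks[OF mpos R, of "{0..<L}"] by blast
  define ps where "ps = concat (map sorted_list_of_set Hs) @ sorted_list_of_set Q"
  have hs: "\<forall>H\<in>set Hs. card H = m \<and>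
      (\<forall>S\<in>[H]\<^bsup>(2 * Suc r + 1)\<^esup>. \<forall>T\<in>[H]\<^bsup>(2 * Suc r + 1)\<^esup>. colset \<Delta> A L r S = colset \<Delta> A L r T)"
    using HQ(1) unfolding col_def .
  note ctx = la D3 mpos hs HQ(3) ps_def HQ(4)[folded ps_def] HQ(5)[folded ps_def] L2R
  have lenps: "length ps = L" using lenps[OF ctx] .
  have ip: "isperm ps" using ip[OF ctx] .
  have tm: "length Hs * m \<le> L" using tm_le[OF ctx] .
  have lenQ: "L = length Hs * m + card Q"
    using len_concat[OF ctx] lenps HQ(3) unfolding ps_def by simp
  let ?n = "L * Suc \<Delta>"
  let ?E = "GE \<Delta> ps"
  let ?out = "output_edges A ?n ?E (colr \<Delta>)"
  have wci: "wc_instance \<Delta> ?n ?E (colr \<Delta>)" using wc[OF ip D3] lenps by simp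
  have apx: "matching ?E ?out" "real (max_matching_size ?E) \<le> \<alpha> * real (card ?out)"
    using ap[unfolded approx_matching_alg_def, rule_format, OF wci] \<alpha>_def by auto
  define Bad where "Bad = {p. p < L \<and> \<not> deep m (length Hs) (Suc (Suc r)) p}"
  define T where "T = (\<lambda>p. P \<Delta> ps p 0) ` {..<L} \<union> (\<lambda>(p, a). P \<Delta> ps p a) ` (Bad \<times> {1..\<Delta>})"
  have meets: "\<forall>e\<in>?out. e \<inter> T \<noteq> {}"
    using out_meets[OF ctx apx(1)] unfolding T_def Bad_def by blast
  have fBad: "finite Bad" unfolding Bad_def by simp
  have fT: "finite T" unfolding T_def using fBad by simp
  have cout: "card ?out \<le> card T" using match_card[OF apx(1) fT meets] .
  have cT: "card T \<le> L + card Bad * \<Delta>"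
  proof -
    have "card T \<le> card ((\<lambda>p. P \<Delta> ps p 0) ` {..<L}) + card ((\<lambda>(p, a). P \<Delta> ps p a) ` (Bad \<times> {1..\<Delta>}))"
      unfolding T_def by (rule card_Un_le)
    also have "\<dots> \<le> card {..<L} + card (Bad \<times> {1..\<Delta>})"
      by (intro add_mono card_image_le) (use fBad in auto)
    also have "\<dots> = L + card Bad * \<Delta>" by (simp add: card_cartesian_product)
    finally show ?thesis .
  qed
  have cBad: "card Bad \<le> length Hs * (2 * K) + (L - length Hs * m)"
    unfolding Bad_def K_def using bad_card[OF tm mpos] .
  have opt: "L + (\<Delta> - 1) * (L div 2) \<le> max_matching_size ?E"
    using opt_bound[OF ip, of \<Delta>] lenps evL D3 by simp
  define t where "t = length Hs"
  define B where "B = card Bad"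
  define Z where "Z = card ?out"
  have rB: "real B \<le> real t * real (2 * K) + real N"
  proof -
    have "L - t * m = card Q" using lenQ t_def by simp
    then have "B \<le> t * (2 * K) + card Q" using cBad unfolding B_def t_def by simp
    then have "B \<le> t * (2 * K) + N" using HQ(2) by linarith
    then show ?thesis by (metis of_nat_add of_nat_le_iff of_nat_mult)
  qed
  have rZ: "real Z \<le> real L + real B * real \<Delta>"
  proof -
    have "Z \<le> L + B * \<Delta>" unfolding Z_def B_def using cout cT by linarith
    then show ?thesis by (metis of_nat_add of_nat_le_iff of_nat_mult)
  qed
  have rtm: "real t * real m \<le> real L" using tm t_def by (metis of_nat_le_iff of_nat_mult)
  have ropt: "real L * ((real \<Delta> + 1) / 2) \<le> real (max_matching_size ?E)"
  proof -
    have "2 * (L div 2) = L" using evL by simp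
    then have hL: "real L = 2 * real (L div 2)" by (metis of_nat_mult of_nat_numeral)
    have d1: "real (\<Delta> - 1) = real \<Delta> - 1" using D3 by (simp add: of_nat_diff)
    have "real L * ((real \<Delta> + 1) / 2) = real L + real (\<Delta> - 1) * real (L div 2)"
      unfolding d1 hL by (simp add: algebra_simps)
    also have "\<dots> = real (L + (\<Delta> - 1) * (L div 2))" by simp
    also have "\<dots> \<le> real (max_matching_size ?E)" using opt by linarith
    finally show ?thesis .
  qed
  have Lpos: "real L > 0" using L2R by simp
  have main: "real L * ((real \<Delta> + 1) / 2) \<le> \<alpha> * real Z" unfolding Z_def using ropt apx(2) by linarith
  show False
  proof (cases "\<alpha> \<le> 0")
    case True
    then have "\<alpha> * real Z \<le> 0" by (simp add: mult_nonpos_nonneg)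
    moreover have "real L * ((real \<Delta> + 1) / 2) > 0" using Lpos by simp
    ultimately show False using main by linarith
  next
    case False
    then have "\<alpha> * real Z \<le> \<alpha> * (real L + real B * real \<Delta>)" using rZ by (intro mult_left_mono) auto
    also have "\<dots> = (real \<Delta> + 1) / 2 * real L + c0 * real B / 2 - \<epsilon> * real L - \<epsilon> * (real B * real \<Delta>)"
      unfolding \<alpha>_def c0_def by (simp add: field_simps)
    also have "\<dots> \<le> (real \<Delta> + 1) / 2 * real L + c0 * real B / 2 - \<epsilon> * real L"
      using ep by simp
    finally have s0: "\<alpha> * real Z \<le> (real \<Delta> + 1) / 2 * real L + c0 * real B / 2 - \<epsilon> * real L" .
    have main': "(real \<Delta> + 1) / 2 * real L \<le> \<alpha> * real Z" using main by (simp add: mult.commute)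
    have s1: "\<epsilon> * real L \<le> c0 * real B / 2" using s0 main' by linarith
    have "c0 * real B \<le> c0 * (real t * real (2 * K) + real N)" using rB c0 by (intro mult_left_mono) auto
    also have "\<dots> = (c0 * real (2 * K)) * real t + c0 * real N" by (simp add: algebra_simps)
    also have "\<dots> \<le> (\<epsilon> * real m) * real t + c0 * real N" using mbig by (intro add_right_mono mult_right_mono) auto
    also have "\<dots> \<le> \<epsilon> * real L + c0 * real N" using rtm ep by (simp add: mult.assoc mult.commute)
    finally have "c0 * real B \<le> \<epsilon> * real L + c0 * real N" .
    then have "\<epsilon> * real L \<le> c0 * real N" using s1 by linarith
    moreover have "c0 * real N \<ge> 0" using c0 by simp
    moreover have "\<epsilon> * real L > 0" using ep Lpos by simp
    ultimately show False using Lbig by linarith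
  qed
qed


end
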